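(* Let $\mathcal{H}$ be a Hilbert space, $K(\mathcal{H})$ the $C^*$-algebra of compact operators on $\mathcal{H}$, and $\mathcal{E}$ a Hilbert $K(\mathcal{H})$-module of (orthogonal) dimension one having the one-element orthonormal basis $\{y\}$ with $\langle y,y\rangle=\xi\otimes\xi$ for some unit vector $\xi\in\mathcal{H}$. Let $x,z\in\mathcal{E}$. If $x\parallel y$ and $y\parallel z$, then $x\parallel z$.
   Context: A (left) Hilbert $K(\mathcal{H})$-module is a left $K(\mathcal{H})$-module $\mathcal{E}$ with a $K(\mathcal{H})$-valued inner product $\langle\cdot,\cdot\rangle$, linear in the first variable and conjugate linear in the second, satisfying $\langle x,x\rangle\ge 0$ with equality iff $x=0$, $\langle ax,y\rangle = a\langle x,y\rangle$ and $\langle x,y\rangle^*=\langle y,x\rangle$, and complete for the norm $\|x\|=\|\langle x,x\rangle\|^{1/2}$. For $\xi,\eta\in\mathcal{H}$ (inner product $[\cdot,\cdot]$), $(\xi\otimes\eta)(\zeta)=[\zeta,\eta]\xi$. A system $\{x_\alpha\}_{\alpha\in\Lambda}\subset\mathcal{E}$ is orthonormal if $\|x_\alpha\|=1$, $\langle x_\alpha,x_\beta\rangle=0$ for $\alpha\ne\beta$, and each $\langle x_\alpha,x_\alpha\rangle$ is a minimal projection; it is an orthonormal basis if it generates a dense submodule of $\mathcal{E}$; the orthogonal dimension is the cardinality of an orthonormal basis. $x\parallel y$ (norm-parallel) means $\|x+\lambda y\|=\|x\|+\|y\|$ for some $\lambda\in\mathbb{C}$ with $|\lambda|=1$. *)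

theory Defs
  imports Complex_Main
begin

text \<open>A complex Hilbert space is modelled on a type 'h with its additive group
structure, a complex scalar multiplication smul and an inner product ip
(linear in the first variable, conjugate linear in the second).\<close>

definition hnorm :: "('h \<Rightarrow> 'h \<Rightarrow> complex) \<Rightarrow> 'h \<Rightarrow> real" where
  "hnorm ip v = sqrt (Re (ip v v))"

definition hilbert_space ::
  "(complex \<Rightarrow> 'h::ab_group_add \<Rightarrow> 'h) \<Rightarrow> ('h \<Rightarrow> 'h \<Rightarrow> complex) \<Rightarrow> bool" where
  "hilbert_space smul ip \<longleftrightarrow>
     (\<forall>v. smul 1 v = v) \<and>
     (\<forall>a b v. smul (a * b) v = smul a (smul b v)) \<and>
     (\<forall>a b v. smul (a + b) v = smul a v + smul b v) \<and>
     (\<forall>a u v. smul a (u + v) = smul a u + smul a v) \<and>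
     (\<forall>u v w. ip (u + v) w = ip u w + ip v w) \<and>
     (\<forall>c u w. ip (smul c u) w = c * ip u w) \<and>
     (\<forall>u v. ip u v = cnj (ip v u)) \<and>
     (\<forall>v. Re (ip v v) \<ge> 0) \<and>
     (\<forall>v. ip v v = 0 \<longrightarrow> v = 0) \<and>
     (\<forall>X::nat \<Rightarrow> 'h. (\<forall>e>0. \<exists>N. \<forall>m\<ge>N. \<forall>n\<ge>N. hnorm ip (X m - X n) < e) \<longrightarrow>
        (\<exists>L. \<forall>e>0. \<exists>N. \<forall>n\<ge>N. hnorm ip (X n - L) < e))"

definition hlinear :: "(complex \<Rightarrow> 'h::ab_group_add \<Rightarrow> 'h) \<Rightarrow> ('h \<Rightarrow> 'h) \<Rightarrow> bool" where
  "hlinear smul T \<longleftrightarrow> (\<forall>u v. T (u + v) = T u + T v) \<and> (\<forall>c v. T (smul c v) = smul c (T v))"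

text \<open>Compact operator: linear, and the image of the closed unit ball is relatively
compact, i.e. (H being complete) totally bounded.\<close>
definition compact_op ::
  "(complex \<Rightarrow> 'h::ab_group_add \<Rightarrow> 'h) \<Rightarrow> ('h \<Rightarrow> 'h \<Rightarrow> complex) \<Rightarrow> ('h \<Rightarrow> 'h) \<Rightarrow> bool" where
  "compact_op smul ip T \<longleftrightarrow> hlinear smul T \<and>
     (\<forall>e>0. \<exists>F. finite F \<and> (\<forall>v. hnorm ip v \<le> 1 \<longrightarrow> (\<exists>w\<in>F. hnorm ip (T v - w) < e)))"

definition opnorm :: "('h \<Rightarrow> 'h \<Rightarrow> complex) \<Rightarrow> ('h \<Rightarrow> 'h) \<Rightarrow> real" where
  "opnorm ip T = Sup {hnorm ip (T v) | v. hnorm ip v \<le> 1}"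

definition is_adjoint :: "('h \<Rightarrow> 'h \<Rightarrow> complex) \<Rightarrow> ('h \<Rightarrow> 'h) \<Rightarrow> ('h \<Rightarrow> 'h) \<Rightarrow> bool" where
  "is_adjoint ip S T \<longleftrightarrow> (\<forall>u v. ip (T u) v = ip u (S v))"

definition op_positive :: "('h \<Rightarrow> 'h \<Rightarrow> complex) \<Rightarrow> ('h \<Rightarrow> 'h) \<Rightarrow> bool" where
  "op_positive ip T \<longleftrightarrow> (\<forall>v. Im (ip (T v) v) = 0 \<and> Re (ip (T v) v) \<ge> 0)"

definition is_projection ::
  "(complex \<Rightarrow> 'h::ab_group_add \<Rightarrow> 'h) \<Rightarrow> ('h \<Rightarrow> 'h \<Rightarrow> complex) \<Rightarrow> ('h \<Rightarrow> 'h) \<Rightarrow> bool" where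
  "is_projection smul ip p \<longleftrightarrow> compact_op smul ip p \<and> p \<circ> p = p \<and> is_adjoint ip p p"

definition minimal_projection ::
  "(complex \<Rightarrow> 'h::ab_group_add \<Rightarrow> 'h) \<Rightarrow> ('h \<Rightarrow> 'h \<Rightarrow> complex) \<Rightarrow> ('h \<Rightarrow> 'h) \<Rightarrow> bool" where
  "minimal_projection smul ip p \<longleftrightarrow> is_projection smul ip p \<and> p \<noteq> (\<lambda>_. 0) \<and>
     (\<forall>q. is_projection smul ip q \<and> op_positive ip (\<lambda>v. p v - q v) \<longrightarrow> q = (\<lambda>_. 0) \<or> q = p)"

definition tensor ::
  "(complex \<Rightarrow> 'h \<Rightarrow> 'h) \<Rightarrow> ('h \<Rightarrow> 'h \<Rightarrow> complex) \<Rightarrow> 'h \<Rightarrow> 'h \<Rightarrow> ('h \<Rightarrow> 'h)" where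
  "tensor smul ip xi eta = (\<lambda>zeta. smul (ip zeta eta) xi)"

definition enorm :: "('h \<Rightarrow> 'h \<Rightarrow> complex) \<Rightarrow> ('e \<Rightarrow> 'e \<Rightarrow> ('h \<Rightarrow> 'h)) \<Rightarrow> 'e \<Rightarrow> real" where
  "enorm ip eip x = sqrt (opnorm ip (eip x x))"

text \<open>Left Hilbert K(H)-module on type 'e: complex scalar multiplication esmul,
left action act of compact operators, K(H)-valued inner product eip.\<close>
definition hilbert_KH_module ::
  "(complex \<Rightarrow> 'h::ab_group_add \<Rightarrow> 'h) \<Rightarrow> ('h \<Rightarrow> 'h \<Rightarrow> complex) \<Rightarrow>
   (complex \<Rightarrow> 'e::ab_group_add \<Rightarrow> 'e) \<Rightarrow> (('h \<Rightarrow> 'h) \<Rightarrow> 'e \<Rightarrow> 'e) \<Rightarrow>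
   ('e \<Rightarrow> 'e \<Rightarrow> ('h \<Rightarrow> 'h)) \<Rightarrow> bool" where
  "hilbert_KH_module smul ip esmul act eip \<longleftrightarrow>
     \<comment> \<open>complex vector space\<close>
     (\<forall>x. esmul 1 x = x) \<and>
     (\<forall>a b x. esmul (a * b) x = esmul a (esmul b x)) \<and>
     (\<forall>a b x. esmul (a + b) x = esmul a x + esmul b x) \<and>
     (\<forall>a x y. esmul a (x + y) = esmul a x + esmul a y) \<and>
     \<comment> \<open>left K(H)-module, compatible with scalars\<close>
     (\<forall>a x y. compact_op smul ip a \<longrightarrow> act a (x + y) = act a x + act a y) \<and>
     (\<forall>a b x. compact_op smul ip a \<and> compact_op smul ip b \<longrightarrow>
        act (\<lambda>v. a v + b v) x = act a x + act b x) \<and>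
     (\<forall>a b x. compact_op smul ip a \<and> compact_op smul ip b \<longrightarrow> act (a \<circ> b) x = act a (act b x)) \<and>
     (\<forall>c a x. compact_op smul ip a \<longrightarrow>
        act (\<lambda>v. smul c (a v)) x = esmul c (act a x) \<and> act a (esmul c x) = esmul c (act a x)) \<and>
     \<comment> \<open>K(H)-valued inner product\<close>
     (\<forall>x y. compact_op smul ip (eip x y)) \<and>
     (\<forall>x x' y. eip (x + x') y = (\<lambda>v. eip x y v + eip x' y v)) \<and>
     (\<forall>c x y. eip (esmul c x) y = (\<lambda>v. smul c (eip x y v))) \<and>
     (\<forall>a x y. compact_op smul ip a \<longrightarrow> eip (act a x) y = a \<circ> eip x y) \<and>
     (\<forall>x y. is_adjoint ip (eip y x) (eip x y)) \<and>
     (\<forall>x. op_positive ip (eip x x)) \<and>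
     (\<forall>x. eip x x = (\<lambda>_. 0) \<longleftrightarrow> x = 0) \<and>
     \<comment> \<open>completeness w.r.t. the norm\<close>
     (\<forall>X::nat \<Rightarrow> 'e. (\<forall>e>0. \<exists>N. \<forall>m\<ge>N. \<forall>n\<ge>N. enorm ip eip (X m - X n) < e) \<longrightarrow>
        (\<exists>L. \<forall>e>0. \<exists>N. \<forall>n\<ge>N. enorm ip eip (X n - L) < e))"

definition is_submodule ::
  "(complex \<Rightarrow> 'h::ab_group_add \<Rightarrow> 'h) \<Rightarrow> ('h \<Rightarrow> 'h \<Rightarrow> complex) \<Rightarrow>
   (complex \<Rightarrow> 'e::ab_group_add \<Rightarrow> 'e) \<Rightarrow> (('h \<Rightarrow> 'h) \<Rightarrow> 'e \<Rightarrow> 'e) \<Rightarrow> 'e set \<Rightarrow> bool" where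
  "is_submodule smul ip esmul act M \<longleftrightarrow> 0 \<in> M \<and>
     (\<forall>x\<in>M. \<forall>y\<in>M. x + y \<in> M) \<and> (\<forall>c. \<forall>x\<in>M. esmul c x \<in> M) \<and>
     (\<forall>a. \<forall>x\<in>M. compact_op smul ip a \<longrightarrow> act a x \<in> M)"

definition generated_submodule ::
  "(complex \<Rightarrow> 'h::ab_group_add \<Rightarrow> 'h) \<Rightarrow> ('h \<Rightarrow> 'h \<Rightarrow> complex) \<Rightarrow>
   (complex \<Rightarrow> 'e::ab_group_add \<Rightarrow> 'e) \<Rightarrow> (('h \<Rightarrow> 'h) \<Rightarrow> 'e \<Rightarrow> 'e) \<Rightarrow> 'e set \<Rightarrow> 'e set" where
  "generated_submodule smul ip esmul act S =
     \<Inter> {M. is_submodule smul ip esmul act M \<and> S \<subseteq> M}"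

definition orthonormal_system ::
  "(complex \<Rightarrow> 'h::ab_group_add \<Rightarrow> 'h) \<Rightarrow> ('h \<Rightarrow> 'h \<Rightarrow> complex) \<Rightarrow>
   ('e \<Rightarrow> 'e \<Rightarrow> ('h \<Rightarrow> 'h)) \<Rightarrow> 'e set \<Rightarrow> bool" where
  "orthonormal_system smul ip eip S \<longleftrightarrow>
     (\<forall>x\<in>S. enorm ip eip x = 1 \<and> minimal_projection smul ip (eip x x)) \<and>
     (\<forall>x\<in>S. \<forall>y\<in>S. x \<noteq> y \<longrightarrow> eip x y = (\<lambda>_. 0))"

definition orthonormal_basis ::
  "(complex \<Rightarrow> 'h::ab_group_add \<Rightarrow> 'h) \<Rightarrow> ('h \<Rightarrow> 'h \<Rightarrow> complex) \<Rightarrow>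
   (complex \<Rightarrow> 'e::ab_group_add \<Rightarrow> 'e) \<Rightarrow> (('h \<Rightarrow> 'h) \<Rightarrow> 'e \<Rightarrow> 'e) \<Rightarrow>
   ('e \<Rightarrow> 'e \<Rightarrow> ('h \<Rightarrow> 'h)) \<Rightarrow> 'e set \<Rightarrow> bool" where
  "orthonormal_basis smul ip esmul act eip S \<longleftrightarrow> orthonormal_system smul ip eip S \<and>
     (\<forall>x. \<forall>e>0. \<exists>w\<in>generated_submodule smul ip esmul act S. enorm ip eip (x - w) < e)"

definition norm_parallel ::
  "('h \<Rightarrow> 'h \<Rightarrow> complex) \<Rightarrow> (complex \<Rightarrow> 'e::ab_group_add \<Rightarrow> 'e) \<Rightarrow>
   ('e \<Rightarrow> 'e \<Rightarrow> ('h \<Rightarrow> 'h)) \<Rightarrow> 'e \<Rightarrow> 'e \<Rightarrow> bool" where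
  "norm_parallel ip esmul eip x y \<longleftrightarrow>
     (\<exists>l. cmod l = 1 \<and> enorm ip eip (x + esmul l y) = enorm ip eip x + enorm ip eip y)"

end

theory Submission imports Defs begin

locale hs =
  fixes smul :: "complex \<Rightarrow> 'h::ab_group_add \<Rightarrow> 'h" and ip :: "'h \<Rightarrow> 'h \<Rightarrow> complex"
  assumes H: "hilbert_space smul ip"
begin

lemma smul_one: "smul 1 v = v" using conjunct1[OF H[unfolded hilbert_space_def]] by blast
lemma smul_mult: "smul (a * b) v = smul a (smul b v)" using conjunct1[OF conjunct2[OF H[unfolded hilbert_space_def]]] by blast
lemma smul_addl: "smul (a + b) v = smul a v + smul b v" using conjunct1[OF conjunct2[OF conjunct2[OF H[unfolded hilbert_space_def]]]] by blast
lemma smul_addr: "smul a (u + v) = smul a u + smul a v" using conjunct1[OF conjunct2[OF conjunct2[OF conjunct2[OF H[unfolded hilbert_space_def]]]]] by blast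
lemma ip_addl: "ip (u + v) w = ip u w + ip v w" using conjunct1[OF conjunct2[OF conjunct2[OF conjunct2[OF conjunct2[OF H[unfolded hilbert_space_def]]]]]] by blast
lemma ip_smull: "ip (smul c u) w = c * ip u w" using conjunct1[OF conjunct2[OF conjunct2[OF conjunct2[OF conjunct2[OF conjunct2[OF H[unfolded hilbert_space_def]]]]]]] by blast
lemma ip_cnj: "ip u v = cnj (ip v u)" using conjunct1[OF conjunct2[OF conjunct2[OF conjunct2[OF conjunct2[OF conjunct2[OF conjunct2[OF H[unfolded hilbert_space_def]]]]]]]] by blast
lemma ip_pos: "Re (ip v v) \<ge> 0" using conjunct1[OF conjunct2[OF conjunct2[OF conjunct2[OF conjunct2[OF conjunct2[OF conjunct2[OF conjunct2[OF H[unfolded hilbert_space_def]]]]]]]]] by blast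
lemma ip_eq0: "ip v v = 0 \<Longrightarrow> v = 0" using conjunct1[OF conjunct2[OF conjunct2[OF conjunct2[OF conjunct2[OF conjunct2[OF conjunct2[OF conjunct2[OF conjunct2[OF H[unfolded hilbert_space_def]]]]]]]]]] by blast

lemma smul_0r[simp]: "smul c 0 = 0"
proof -
  have "smul c 0 + smul c 0 = smul c 0 + 0" using smul_addr[of c 0 0] by (metis add.right_neutral)
  then show ?thesis by (rule add_left_imp_eq)
qed
lemma smul_0l[simp]: "smul 0 v = 0"
proof -
  have "smul 0 v + smul 0 v = smul 0 v + 0" using smul_addl[of 0 0 v] by (metis add.right_neutral)
  then show ?thesis by (rule add_left_imp_eq)
qed
lemma smul_minusr: "smul c (- v) = - smul c v"
proof -
  have "smul c v + smul c (- v) = 0" using smul_addr[of c v "-v"] by (metis smul_0r ab_group_add_class.ab_left_minus add.commute)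
  then show ?thesis by (metis add.commute add_eq_0_iff)
qed
lemma smul_diffr: "smul c (u - v) = smul c u - smul c v"
  by (metis diff_conv_add_uminus smul_addr smul_minusr)
lemma smul_minusl: "smul (-c) v = - smul c v"
proof -
  have "smul c v + smul (-c) v = 0" using smul_addl[of c "-c" v] by (metis smul_0l add.right_inverse)
  then show ?thesis by (metis add.commute add_eq_0_iff)
qed
lemma ip_0l[simp]: "ip 0 w = 0"
proof -
  have "ip 0 w + ip 0 w = ip 0 w + 0" using ip_addl[of 0 0 w] by (metis add.right_neutral)
  then show ?thesis by (rule add_left_imp_eq)
qed
lemma ip_minusl: "ip (- u) w = - ip u w"
proof -
  have "ip u w + ip (- u) w = 0" using ip_addl[of u "-u" w] by (metis ip_0l add.right_inverse)
  then show ?thesis by (metis add.commute add_eq_0_iff)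
qed
lemma ip_diffl: "ip (u - v) w = ip u w - ip v w"
  by (metis diff_conv_add_uminus ip_addl ip_minusl)
lemma ip_addr: "ip u (v + w) = ip u v + ip u w"
proof -
  have "ip u (v + w) = cnj (ip (v + w) u)" by (rule ip_cnj)
  also have "\<dots> = ip u v + ip u w" by (simp add: ip_addl ip_cnj[of u v] ip_cnj[of u w])
  finally show ?thesis .
qed
lemma ip_smulr: "ip u (smul c v) = cnj c * ip u v"
proof -
  have "ip u (smul c v) = cnj (ip (smul c v) u)" by (rule ip_cnj)
  also have "\<dots> = cnj c * ip u v" by (simp add: ip_smull ip_cnj[of u v])
  finally show ?thesis .
qed
lemma ip_0r[simp]: "ip u 0 = 0"
proof -
  have "ip u 0 = cnj (ip 0 u)" by (rule ip_cnj)
  then show ?thesis by simp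
qed
lemma ip_minusr: "ip u (- v) = - ip u v"
proof -
  have "ip u (- v) = cnj (ip (- v) u)" by (rule ip_cnj)
  also have "\<dots> = - ip u v" by (simp add: ip_minusl ip_cnj[of u v])
  finally show ?thesis .
qed
lemma ip_diffr: "ip u (v - w) = ip u v - ip u w"
  by (simp only: diff_conv_add_uminus ip_addr ip_minusr)

lemma ip_self_real: "ip v v = complex_of_real (Re (ip v v))"
proof -
  have e: "ip v v = cnj (ip v v)" by (rule ip_cnj)
  have "Im (ip v v) = 0" using arg_cong[OF e, of Im] by simp
  then show ?thesis by (simp add: complex_eq_iff)
qed

lemma hnorm_sq: "hnorm ip v ^ 2 = Re (ip v v)"
  unfolding hnorm_def by (simp add: ip_pos)
lemma ip_self: "ip v v = complex_of_real (hnorm ip v ^ 2)"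
  using ip_self_real hnorm_sq by simp
lemma hnorm_nonneg: "hnorm ip v \<ge> 0" unfolding hnorm_def by (simp add: ip_pos)
lemma hnorm_0[simp]: "hnorm ip 0 = 0" unfolding hnorm_def by simp
lemma hnorm_eq0: "hnorm ip v = 0 \<longleftrightarrow> v = 0"
proof
  assume "hnorm ip v = 0"
  then have "ip v v = 0" using ip_self[of v] by simp
  then show "v = 0" by (rule ip_eq0)
qed simp

lemma hnorm_smul: "hnorm ip (smul c v) = cmod c * hnorm ip v"
proof -
  have "ip (smul c v) (smul c v) = (c * cnj c) * ip v v" by (simp add: ip_smull ip_smulr)
  also have "\<dots> = complex_of_real (cmod c ^ 2) * complex_of_real (hnorm ip v ^ 2)"
    by (simp only: ip_self complex_norm_square)
  also have "\<dots> = complex_of_real ((cmod c * hnorm ip v)^2)"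
    by (simp add: power_mult_distrib)
  finally have "hnorm ip (smul c v) ^2 = (cmod c * hnorm ip v)^2"
    using ip_self[of "smul c v"] by (metis of_real_eq_iff)
  then show ?thesis using hnorm_nonneg
    by (metis norm_ge_zero zero_le_mult_iff power2_eq_iff_nonneg)
qed

lemma hnorm_expand: "hnorm ip (u + v) ^ 2 = hnorm ip u ^ 2 + 2 * Re (ip u v) + hnorm ip v ^ 2"
proof -
  have "ip (u+v) (u+v) = ip u u + ip u v + ip v u + ip v v" by (simp add: ip_addl ip_addr)
  moreover have "Re (ip v u) = Re (ip u v)" using ip_cnj[of v u] by simp
  ultimately show ?thesis by (simp add: hnorm_sq)
qed

lemma hnorm_minus: "hnorm ip (- v) = hnorm ip v"
  unfolding hnorm_def by (simp add: ip_minusl ip_minusr)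

lemma cs: "cmod (ip u v) \<le> hnorm ip u * hnorm ip v"
proof (cases "v = 0")
  case True then show ?thesis by simp
next
  case False
  define N where "N = hnorm ip v ^ 2"
  have N: "N > 0" using False hnorm_eq0 hnorm_nonneg N_def by (metis not_less_iff_gr_or_eq zero_less_power2)
  define s where "s = ip u v"
  define t where "t = s / complex_of_real N"
  have eq1: "ip (u - smul t v) (u - smul t v) = ip u u - cnj t * s - t * cnj s + t * cnj t * N"
    unfolding s_def by (simp add: ip_diffl ip_diffr ip_smull ip_smulr ip_self[of v] N_def algebra_simps ip_cnj[of v u])
  have ss: "s * cnj s = complex_of_real (cmod s) * complex_of_real (cmod s)"
    using complex_norm_square[of s] by (simp add: power2_eq_square)
  have eq2: "ip u u - cnj t * s - t * cnj s + t * cnj t * N = ip u u - complex_of_real (cmod s ^ 2 / N)"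
    using N ss unfolding t_def by (simp add: field_simps power2_eq_square)
  have "Re (ip (u - smul t v) (u - smul t v)) = hnorm ip u ^ 2 - cmod s ^ 2 / N"
    unfolding eq1 eq2 by (simp add: hnorm_sq)
  then have "cmod s ^ 2 / N \<le> hnorm ip u ^ 2" using ip_pos[of "u - smul t v"] by linarith
  then have "cmod s ^ 2 \<le> (hnorm ip u * hnorm ip v) ^ 2" using N unfolding N_def
    by (simp add: field_simps power_mult_distrib)
  then show ?thesis unfolding s_def using hnorm_nonneg
    by (meson mult_nonneg_nonneg power2_le_imp_le)
qed

lemma triangle: "hnorm ip (u + v) \<le> hnorm ip u + hnorm ip v"
proof -
  have "Re (ip u v) \<le> hnorm ip u * hnorm ip v" using cs[of u v] complex_Re_le_cmod order_trans by blast
  then have "hnorm ip (u + v) ^ 2 \<le> (hnorm ip u + hnorm ip v) ^ 2"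
    by (simp add: hnorm_expand power2_sum)
  then show ?thesis using hnorm_nonneg by (meson add_nonneg_nonneg power2_le_imp_le)
qed

lemma nondeg: "(\<And>w. ip u w = 0) \<Longrightarrow> u = 0"
  using ip_eq0 by blast

lemma equality_case:
  assumes "hnorm ip (u + v) = hnorm ip u + hnorm ip v" "hnorm ip v = 1"
  shows "u = smul (complex_of_real (hnorm ip u)) v"
proof -
  define a where "a = hnorm ip u"
  have "(a + 1)^2 = a^2 + 2 * Re (ip u v) + 1"
    using hnorm_expand[of u v] assms unfolding a_def by simp
  then have R: "Re (ip u v) = a" by (simp add: power2_sum)
  have "hnorm ip (u - smul a v) ^ 2 = hnorm ip u ^ 2 + 2 * Re (ip u (- smul a v)) + hnorm ip (- smul a v) ^ 2"
    using hnorm_expand[of u "- smul a v"] by simp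
  also have "\<dots> = a^2 - 2 * a * Re (ip u v) + a^2"
    using assms(2) hnorm_nonneg[of u] by (simp add: ip_minusr ip_smulr hnorm_minus hnorm_smul a_def)
  also have "\<dots> = 0" using R by (simp add: power2_eq_square)
  finally show ?thesis using hnorm_eq0 unfolding a_def by simp
qed


lemma lin_add: "compact_op smul ip T \<Longrightarrow> T (u + v) = T u + T v"
  unfolding compact_op_def hlinear_def by blast
lemma lin_smul: "compact_op smul ip T \<Longrightarrow> T (smul c v) = smul c (T v)"
  unfolding compact_op_def hlinear_def by blast
lemma lin_0: "compact_op smul ip T \<Longrightarrow> T 0 = 0"
  using lin_smul[of T 0 0] by simp
lemma lin_minus: "compact_op smul ip T \<Longrightarrow> T (- v) = - T v"
  using lin_smul[of T "-1" v] smul_minusl[of 1] smul_one by simp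
lemma lin_diff: "compact_op smul ip T \<Longrightarrow> T (u - v) = T u - T v"
  by (simp only: diff_conv_add_uminus lin_add lin_minus)

lemma compact_bdd:
  assumes "compact_op smul ip T"
  shows "bdd_above {hnorm ip (T v) | v. hnorm ip v \<le> 1}"
proof -
  have "\<forall>e>0. \<exists>F. finite F \<and> (\<forall>v. hnorm ip v \<le> 1 \<longrightarrow> (\<exists>w\<in>F. hnorm ip (T v - w) < e))"
    using assms unfolding compact_op_def by blast
  then obtain F where F: "finite F" "\<forall>v. hnorm ip v \<le> 1 \<longrightarrow> (\<exists>w\<in>F. hnorm ip (T v - w) < 1)"
    using zero_less_one by blast
  show ?thesis
  proof (rule bdd_aboveI)
    fix r assume "r \<in> {hnorm ip (T v) | v. hnorm ip v \<le> 1}"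
    then obtain v where v: "r = hnorm ip (T v)" "hnorm ip v \<le> 1" by blast
    then obtain w where w: "w \<in> F" "hnorm ip (T v - w) < 1" using F(2) by blast
    have "hnorm ip (T v) \<le> hnorm ip (T v - w) + hnorm ip w" using triangle[of "T v - w" w] by simp
    moreover have "hnorm ip w \<le> (\<Sum>w\<in>F. hnorm ip w)"
      by (rule member_le_sum) (use w F hnorm_nonneg in auto)
    ultimately show "r \<le> 1 + (\<Sum>w\<in>F. hnorm ip w)" using v w by linarith
  qed
qed

lemma opnorm_upper: "compact_op smul ip T \<Longrightarrow> hnorm ip v \<le> 1 \<Longrightarrow> hnorm ip (T v) \<le> opnorm ip T"
  unfolding opnorm_def by (rule cSup_upper) (auto intro: compact_bdd)

lemma opnorm_tensor: "opnorm ip (tensor smul ip e e) = hnorm ip e ^ 2"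
  unfolding opnorm_def tensor_def
proof (rule cSup_eq_maximum)
  define n where "n = hnorm ip e"
  show "hnorm ip e ^ 2 \<in> {hnorm ip (smul (ip v e) e) |v. hnorm ip v \<le> 1}"
  proof (cases "e = 0")
    case True then show ?thesis by (auto intro!: exI[of _ 0])
  next
    case False
    then have n: "n > 0" using hnorm_eq0 hnorm_nonneg n_def by (metis less_eq_real_def)
    define v where "v = smul (complex_of_real (1/n)) e"
    have hv: "hnorm ip v = 1" using n unfolding v_def by (simp add: hnorm_smul n_def norm_divide)
    have "ip v e = complex_of_real (1/n) * complex_of_real (n^2)"
      unfolding v_def by (simp add: ip_smull ip_self n_def)
    then have "ip v e = complex_of_real n" using n by (simp add: power2_eq_square)
    then have "hnorm ip (smul (ip v e) e) = hnorm ip e ^ 2"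
      using n by (simp add: hnorm_smul n_def power2_eq_square)
    then show ?thesis using hv by (metis (mono_tags, lifting) mem_Collect_eq order_refl)
  qed
  fix x assume "x \<in> {hnorm ip (smul (ip v e) e) |v. hnorm ip v \<le> 1}"
  then obtain v where v: "x = hnorm ip (smul (ip v e) e)" "hnorm ip v \<le> 1" by blast
  have "x = cmod (ip v e) * hnorm ip e" using v by (simp add: hnorm_smul)
  also have "\<dots> \<le> (hnorm ip v * hnorm ip e) * hnorm ip e"
    using cs[of v e] hnorm_nonneg[of e] by (rule mult_right_mono)
  also have "\<dots> \<le> 1 * hnorm ip e * hnorm ip e"
    using mult_right_mono[OF mult_right_mono[OF v(2) hnorm_nonneg[of e]] hnorm_nonneg[of e]] by simp
  finally show "x \<le> hnorm ip e ^ 2" by (simp add: power2_eq_square)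
qed

end

locale km = hs smul ip
  for smul :: "complex \<Rightarrow> 'h::ab_group_add \<Rightarrow> 'h" and ip +
  fixes esmul :: "complex \<Rightarrow> 'e::ab_group_add \<Rightarrow> 'e"
    and act :: "('h \<Rightarrow> 'h) \<Rightarrow> 'e \<Rightarrow> 'e"
    and eip :: "'e \<Rightarrow> 'e \<Rightarrow> ('h \<Rightarrow> 'h)"
  assumes M: "hilbert_KH_module smul ip esmul act eip"
begin

lemma eip_compact: "compact_op smul ip (eip x y)" using conjunct1[OF conjunct2[OF conjunct2[OF conjunct2[OF conjunct2[OF conjunct2[OF conjunct2[OF conjunct2[OF conjunct2[OF M[unfolded hilbert_KH_module_def]]]]]]]]]] by blast
lemma eip_addl: "eip (x + x') y = (\<lambda>v. eip x y v + eip x' y v)" using conjunct1[OF conjunct2[OF conjunct2[OF conjunct2[OF conjunct2[OF conjunct2[OF conjunct2[OF conjunct2[OF conjunct2[OF conjunct2[OF M[unfolded hilbert_KH_module_def]]]]]]]]]]] by blast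
lemma eip_smull: "eip (esmul c x) y = (\<lambda>v. smul c (eip x y v))" using conjunct1[OF conjunct2[OF conjunct2[OF conjunct2[OF conjunct2[OF conjunct2[OF conjunct2[OF conjunct2[OF conjunct2[OF conjunct2[OF conjunct2[OF M[unfolded hilbert_KH_module_def]]]]]]]]]]]] by blast
lemma eip_act: "compact_op smul ip a \<Longrightarrow> eip (act a x) y = a \<circ> eip x y" using conjunct1[OF conjunct2[OF conjunct2[OF conjunct2[OF conjunct2[OF conjunct2[OF conjunct2[OF conjunct2[OF conjunct2[OF conjunct2[OF conjunct2[OF conjunct2[OF M[unfolded hilbert_KH_module_def]]]]]]]]]]]]] by blast
lemma eip_adj: "is_adjoint ip (eip y x) (eip x y)" using conjunct1[OF conjunct2[OF conjunct2[OF conjunct2[OF conjunct2[OF conjunct2[OF conjunct2[OF conjunct2[OF conjunct2[OF conjunct2[OF conjunct2[OF conjunct2[OF conjunct2[OF M[unfolded hilbert_KH_module_def]]]]]]]]]]]]]] by blast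
lemma eip_pos: "op_positive ip (eip x x)" using conjunct1[OF conjunct2[OF conjunct2[OF conjunct2[OF conjunct2[OF conjunct2[OF conjunct2[OF conjunct2[OF conjunct2[OF conjunct2[OF conjunct2[OF conjunct2[OF conjunct2[OF conjunct2[OF M[unfolded hilbert_KH_module_def]]]]]]]]]]]]]]] by blast
lemma eip_eq0: "eip x x = (\<lambda>_. 0) \<longleftrightarrow> x = 0" using conjunct1[OF conjunct2[OF conjunct2[OF conjunct2[OF conjunct2[OF conjunct2[OF conjunct2[OF conjunct2[OF conjunct2[OF conjunct2[OF conjunct2[OF conjunct2[OF conjunct2[OF conjunct2[OF conjunct2[OF M[unfolded hilbert_KH_module_def]]]]]]]]]]]]]]]] by blast

lemma adj_unique:
  assumes "is_adjoint ip S T" "is_adjoint ip S' T"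
  shows "S = S'"
proof
  fix v
  have e: "ip u (S v) = ip u (S' v)" for u using assms unfolding is_adjoint_def by metis
  have "ip (S v - S' v) (S v - S' v) = 0" using e[of "S v - S' v"] by (simp add: ip_diffr)
  then have "S v - S' v = 0" by (rule ip_eq0)
  then show "S v = S' v" by simp
qed

lemma eip_swap: "is_adjoint ip S (eip x w) \<Longrightarrow> eip w x = S"
  using adj_unique eip_adj by blast

lemma eip_0l: "eip 0 w = (\<lambda>_. 0)"
proof
  fix v
  have "eip 0 w v = eip 0 w v + eip 0 w v" using fun_cong[OF eip_addl[of 0 0 w], of v] by (simp only: add.right_neutral)
  then show "eip 0 w v = 0" by (simp only: add_cancel_right_right)
qed

lemma eip_minusl: "eip (- x) w = (\<lambda>v. - eip x w v)"
proof
  fix v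
  have "0 = eip x w v + eip (- x) w v" using fun_cong[OF eip_addl[of x "-x" w], of v] eip_0l by simp
  then show "eip (- x) w v = - eip x w v" by (metis add.commute add_eq_0_iff)
qed

lemma eip_diffl: "eip (x - x') w = (\<lambda>v. eip x w v - eip x' w v)"
  by (simp only: diff_conv_add_uminus eip_addl eip_minusl)

lemma eip_0r: "eip w 0 = (\<lambda>_. 0)"
  by (rule eip_swap) (simp add: is_adjoint_def eip_0l)

lemma eip_addr: "eip w (u + u') = (\<lambda>v. eip w u v + eip w u' v)"
proof (rule eip_swap)
  show "is_adjoint ip (\<lambda>v. eip w u v + eip w u' v) (eip (u + u') w)"
    unfolding is_adjoint_def eip_addl
    using eip_adj[of w u] eip_adj[of w u'] unfolding is_adjoint_def by (simp add: ip_addl ip_addr)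
qed

lemma eip_diffr: "eip w (u - u') = (\<lambda>v. eip w u v - eip w u' v)"
proof (rule eip_swap)
  show "is_adjoint ip (\<lambda>v. eip w u v - eip w u' v) (eip (u - u') w)"
    unfolding is_adjoint_def eip_diffl
    using eip_adj[of w u] eip_adj[of w u'] unfolding is_adjoint_def by (simp add: ip_diffl ip_diffr)
qed

lemma eip_zero_swap: "eip x w = (\<lambda>_. 0) \<Longrightarrow> eip w x = (\<lambda>_. 0)"
  by (rule eip_swap) (simp add: is_adjoint_def)

end

locale km2 = km smul ip esmul act eip
  for smul :: "complex \<Rightarrow> 'h::ab_group_add \<Rightarrow> 'h" and ip
    and esmul :: "complex \<Rightarrow> 'e::ab_group_add \<Rightarrow> 'e" and act eip +
  fixes y :: 'e and xi :: 'h
  assumes B: "orthonormal_basis smul ip esmul act eip {y}"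
    and xi1: "hnorm ip xi = 1"
    and yy: "eip y y = tensor smul ip xi xi"
begin

lemma P_app: "eip y y v = smul (ip v xi) xi"
  using yy unfolding tensor_def by simp

lemma ipxx: "ip xi xi = 1"
  using ip_self[of xi] xi1 by simp

lemma P_comp: "eip y y (eip y y v) = eip y y v"
  by (simp add: P_app ip_smull ipxx)

lemma Pc: "compact_op smul ip (eip y y)" by (rule eip_compact)

lemma P_adj: "ip (eip y y u) w = ip u (eip y y w)"
  using eip_adj[of y y] unfolding is_adjoint_def by blast

lemma actPy: "act (eip y y) y = y"
proof -
  define d where "d = y - act (eip y y) y"
  have d1: "eip d y = (\<lambda>_. 0)"
    unfolding d_def eip_diffl eip_act[OF Pc] by (simp add: P_comp)
  have d2: "eip y d = (\<lambda>_. 0)" using eip_zero_swap[OF d1] .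
  have d3: "eip (act (eip y y) y) d = (\<lambda>_. 0)"
    unfolding eip_act[OF Pc] d2 using lin_0[OF Pc] by (simp add: comp_def)
  have "eip d d = (\<lambda>_. 0)"
    by (subst (1) d_def) (simp add: eip_diffl d2 d3)
  then have "d = 0" using eip_eq0 by blast
  then show ?thesis unfolding d_def by simp
qed

lemma coef_P: "eip x y v = eip x y (eip y y v)"
proof -
  have S: "eip y x w = eip y y (eip y x w)" for w
  proof -
    have "eip y x = eip (act (eip y y) y) x" using actPy by simp
    also have "\<dots> = eip y y \<circ> eip y x" by (rule eip_act[OF Pc])
    finally show ?thesis by (metis comp_apply)
  qed
  have "ip (eip x y v - eip x y (eip y y v)) w = 0" for w
  proof -
    have "ip (eip x y v) w = ip v (eip y x w)" using eip_adj[of y x] unfolding is_adjoint_def by blast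
    also have "\<dots> = ip v (eip y y (eip y x w))" using S by metis
    also have "\<dots> = ip (eip y y v) (eip y x w)" using P_adj by metis
    also have "\<dots> = ip (eip x y (eip y y v)) w" using eip_adj[of y x] unfolding is_adjoint_def by metis
    finally show ?thesis by (simp add: ip_diffl)
  qed
  then have "eip x y v - eip x y (eip y y v) = 0" using ip_eq0 by blast
  then show ?thesis by simp
qed

lemma coef_form: "eip x y v = smul (ip v xi) (eip x y xi)"
  using coef_P[of x v] by (simp add: P_app lin_smul[OF eip_compact])

definition Phi :: "'e \<Rightarrow> 'h" where "Phi x = eip x y xi"

lemma Phi_lin: "Phi (x + esmul l z) = Phi x + smul l (Phi z)"
  unfolding Phi_def by (simp add: eip_addl eip_smull)

lemma Phi_y: "Phi y = xi"
  unfolding Phi_def P_app ipxx by (simp add: smul_one)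


lemma quad_zero_pos:
  assumes A: "compact_op smul ip A" and q: "\<And>v. ip (A v) v = 0"
  shows "A = (\<lambda>_. 0)"
proof
  fix u
  have pol: "cnj c * ip (A u) v + c * ip (A v) u = 0" for c v
  proof -
    have "ip (A (u + smul c v)) (u + smul c v) = 0" by (rule q)
    moreover have "ip (A (u + smul c v)) (u + smul c v) =
        ip (A u) u + cnj c * ip (A u) v + c * ip (A v) u + c * cnj c * ip (A v) v"
      by (simp add: lin_add[OF A] lin_smul[OF A] ip_addl ip_addr ip_smull ip_smulr algebra_simps)
    ultimately show ?thesis using q[of u] q[of v] by simp
  qed
  have "ip (A u) (A u) = 0"
    using pol[of 1 "A u"] pol[of "\<i>" "A u"] by (simp add: algebra_simps)
  then show "A u = 0" by (rule ip_eq0)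
qed

lemma gen_sub: "generated_submodule smul ip esmul act {y} \<subseteq> M'"
  if "is_submodule smul ip esmul act M'" "y \<in> M'"
  unfolding generated_submodule_def using that by blast

lemma recon: "x = act (eip x y) y"
proof -
  define a where "a = eip x y"
  define w where "w = x - act a y"
  have ac: "compact_op smul ip a" unfolding a_def by (rule eip_compact)
  have wy: "eip w y = (\<lambda>_. 0)"
    unfolding w_def eip_diffl eip_act[OF ac] using coef_P[of x] unfolding a_def by (simp add: comp_def)
  define M' where "M' = {u. eip u w = (\<lambda>_. 0)}"
  have sub: "is_submodule smul ip esmul act M'"
    unfolding is_submodule_def M'_def
    by (auto simp: eip_0l eip_addl eip_smull eip_act comp_def lin_0)
  have yM: "y \<in> M'" unfolding M'_def using eip_zero_swap[OF wy] by simp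
  have genM: "\<And>u. u \<in> generated_submodule smul ip esmul act {y} \<Longrightarrow> eip u w = (\<lambda>_. 0)"
    using gen_sub[OF sub yM] unfolding M'_def by blast
  have dens: "\<forall>e>0. \<exists>u\<in>generated_submodule smul ip esmul act {y}. enorm ip eip (w - u) < e"
    using B unfolding orthonormal_basis_def by blast
  define A where "A = eip w w"
  have Ac: "compact_op smul ip A" unfolding A_def by (rule eip_compact)
  have Apos: "Im (ip (A v) v) = 0 \<and> Re (ip (A v) v) \<ge> 0" for v
    using eip_pos[of w] unfolding A_def op_positive_def by blast
  have small: "Re (ip (A v) v) < e" if v: "hnorm ip v \<le> 1" and e: "e > 0" for v e
  proof -
    obtain u where u: "u \<in> generated_submodule smul ip esmul act {y}" "enorm ip eip (w - u) < sqrt e"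
      using dens e by (meson real_sqrt_gt_zero)
    have uw: "eip u w = (\<lambda>_. 0)" using genM[OF u(1)] .
    have wu: "eip w u = (\<lambda>_. 0)" using eip_zero_swap[OF uw] .
    define T where "T = eip (w - u) (w - u)"
    have Tc: "compact_op smul ip T" unfolding T_def by (rule eip_compact)
    have Teq: "T t = A t + eip u u t" for t
      unfolding T_def A_def eip_diffl eip_diffr uw wu by simp
    have "opnorm ip T < e"
    proof (cases "opnorm ip T \<le> 0")
      case True then show ?thesis using e by linarith
    next
      case False
      then show ?thesis using u(2) unfolding enorm_def T_def by (simp add: real_sqrt_less_iff)
    qed
    have "Re (ip (A v) v) \<le> Re (ip (T v) v)"
      using eip_pos[of u] unfolding op_positive_def by (simp add: Teq ip_addl)
    also have "\<dots> \<le> cmod (ip (T v) v)" by (rule complex_Re_le_cmod)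
    also have "\<dots> \<le> hnorm ip (T v) * hnorm ip v" by (rule cs)
    also have "\<dots> \<le> hnorm ip (T v)"
      using v hnorm_nonneg[of "T v"] by (simp add: mult_left_le)
    also have "\<dots> \<le> opnorm ip T" by (rule opnorm_upper[OF Tc v])
    finally show ?thesis using \<open>opnorm ip T < e\<close> by linarith
  qed
  have q1: "ip (A v) v = 0" if v: "hnorm ip v \<le> 1" for v
  proof -
    have "Re (ip (A v) v) \<le> 0"
    proof (rule ccontr)
      assume "\<not> Re (ip (A v) v) \<le> 0"
      then show False using small[OF v, of "Re (ip (A v) v)"] by simp
    qed
    then have "Re (ip (A v) v) = 0" using Apos[of v] by linarith
    then show ?thesis using Apos[of v] by (simp add: complex_eq_iff)
  qed
  have q: "ip (A v) v = 0" for v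
  proof (cases "v = 0")
    case True then show ?thesis by simp
  next
    case False
    define n where "n = hnorm ip v"
    have n: "n > 0" using False hnorm_eq0 hnorm_nonneg n_def by (metis less_eq_real_def)
    define v' where "v' = smul (complex_of_real (1/n)) v"
    have "hnorm ip v' = 1" using n unfolding v'_def by (simp add: hnorm_smul n_def norm_divide)
    then have "ip (A v') v' = 0" using q1 by simp
    moreover have "ip (A v') v' = complex_of_real (1/n) * complex_of_real (1/n) * ip (A v) v"
      unfolding v'_def by (simp add: lin_smul[OF Ac] ip_smull ip_smulr)
    ultimately show ?thesis using n by simp
  qed
  have "A = (\<lambda>_. 0)" by (rule quad_zero_pos[OF Ac q])
  then have "w = 0" using eip_eq0 unfolding A_def by blast
  then show ?thesis unfolding w_def a_def by simp
qed

lemma eip_self: "eip x x = tensor smul ip (Phi x) (Phi x)"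
proof
  fix t
  define a where "a = eip x y"
  have ac: "compact_op smul ip a" unfolding a_def by (rule eip_compact)
  have "eip x x = eip (act a y) x" using recon[of x] unfolding a_def by (rule arg_cong[where f="\<lambda>z. eip z x"])
  also have "\<dots> = a \<circ> eip y x" by (rule eip_act[OF ac])
  finally have "eip x x t = a (eip y x t)" by simp
  also have "\<dots> = smul (ip (eip y x t) xi) (a xi)" unfolding a_def by (rule coef_form)
  also have "ip (eip y x t) xi = ip t (a xi)"
  proof -
    have "ip (a xi) t = ip xi (eip y x t)" using eip_adj[of y x] unfolding is_adjoint_def a_def by blast
    then show ?thesis by (metis ip_cnj)
  qed
  finally show "eip x x t = tensor smul ip (Phi x) (Phi x) t"
    unfolding tensor_def Phi_def a_def by simp
qed

lemma enorm_Phi: "enorm ip eip x = hnorm ip (Phi x)"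
  unfolding enorm_def eip_self opnorm_tensor using hnorm_nonneg by simp

end

theorem corollary2p6:
  fixes smul :: "complex \<Rightarrow> 'h::ab_group_add \<Rightarrow> 'h"
    and ip :: "'h \<Rightarrow> 'h \<Rightarrow> complex"
    and esmul :: "complex \<Rightarrow> 'e::ab_group_add \<Rightarrow> 'e"
    and act :: "('h \<Rightarrow> 'h) \<Rightarrow> 'e \<Rightarrow> 'e"
    and eip :: "'e \<Rightarrow> 'e \<Rightarrow> ('h \<Rightarrow> 'h)"
    and y x z :: 'e and xi :: 'h
  assumes "hilbert_space smul ip"
    and "hilbert_KH_module smul ip esmul act eip"
    and "orthonormal_basis smul ip esmul act eip {y}"
    and "hnorm ip xi = 1"
    and "eip y y = tensor smul ip xi xi"
    and "norm_parallel ip esmul eip x y"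
    and "norm_parallel ip esmul eip y z"
  shows "norm_parallel ip esmul eip x z"
proof -
  interpret km2 smul ip esmul act eip y xi
    using assms(1-5) by (unfold_locales) auto
  obtain l where l: "cmod l = 1" "enorm ip eip (x + esmul l y) = enorm ip eip x + enorm ip eip y"
    using assms(6) unfolding norm_parallel_def by blast
  obtain l' where l': "cmod l' = 1" "enorm ip eip (y + esmul l' z) = enorm ip eip y + enorm ip eip z"
    using assms(7) unfolding norm_parallel_def by blast
  define n where "n = hnorm ip (Phi x)"
  define m where "m = hnorm ip (Phi z)"
  have h1: "hnorm ip (smul l xi) = 1" using l(1) xi1 by (simp add: hnorm_smul)
  have "hnorm ip (Phi x + smul l xi) = hnorm ip (Phi x) + hnorm ip (smul l xi)"
    using l(2) h1 unfolding enorm_Phi Phi_lin Phi_y xi1 by simp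
  then have eq1: "Phi x = smul (complex_of_real n) (smul l xi)"
    using equality_case[OF _ h1] unfolding n_def by blast
  have h2: "hnorm ip (smul l' (Phi z)) = m" using l'(1) by (simp add: hnorm_smul m_def)
  have "hnorm ip (smul l' (Phi z) + xi) = hnorm ip (smul l' (Phi z)) + hnorm ip xi"
    using l'(2) h2 unfolding enorm_Phi Phi_lin Phi_y xi1 m_def by (simp add: add.commute)
  then have eq2: "smul l' (Phi z) = smul (complex_of_real m) xi"
    using equality_case[OF _ xi1] h2 by metis
  have "Phi (x + esmul (l * l') z) = smul (complex_of_real n) (smul l xi) + smul l (smul (complex_of_real m) xi)"
    unfolding Phi_lin eq1 smul_mult[symmetric] using eq2 by (simp add: smul_mult)
  also have "\<dots> = smul (l * complex_of_real (n + m)) xi"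
    by (simp add: smul_mult[symmetric] smul_addl[symmetric] algebra_simps)
  moreover have cm: "cmod (complex_of_real n + complex_of_real m) = n + m"
  proof -
    have "n + m \<ge> 0" unfolding n_def m_def using hnorm_nonneg by (simp add: add_nonneg_nonneg)
    then show ?thesis by (metis of_real_add norm_of_real abs_of_nonneg)
  qed
  ultimately have "enorm ip eip (x + esmul (l * l') z) = n + m"
    unfolding enorm_Phi using l(1) xi1
    by (simp add: hnorm_smul norm_mult)
  moreover have "cmod (l * l') = 1" using l(1) l'(1) by (simp add: norm_mult)
  ultimately show ?thesis unfolding norm_parallel_def enorm_Phi n_def m_def by blast
qed

end
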